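(* Let $\Omega\subset\mathbb{R}^3$ be a bounded contractible Lipschitz polyhedral domain, and let $H_0^h(\mathrm{grad},\Omega)\subset H_0^1(\Omega)$ and $H_0^h(\mathrm{curl},\Omega)\subset H_0(\mathrm{curl},\Omega)$ be finite element spaces (piecewise polynomial on a mesh) with $\nabla H_0^h(\mathrm{grad},\Omega)\subset H_0^h(\mathrm{curl},\Omega)$. Let $\mathbb Q_h^{\mathrm{curl}}$ be the $L^2(\Omega)^3$-orthogonal projection onto $H_0^h(\mathrm{curl},\Omega)$. Let $\Delta t>0$, $R_e\in(0,\infty]$. Let $\bm u^n,\bm u^{n+1}\in H_0^h(\mathrm{curl},\Omega)$, $p\in H_0^h(\mathrm{grad},\Omega)$, set $\bm\omega^k:=\mathbb Q_h^{\mathrm{curl}}(\nabla\times\bm u^k)$ for $k=n,n+1$, $\bm u:=\frac12(\bm u^{n+1}+\bm u^n)$, $\bm\omega:=\frac12(\bm\omega^{n+1}+\bm\omega^n)$ and $D_t\bm u:=(\bm u^{n+1}-\bm u^n)/\Delta t$, and suppose that $$(D_t\bm u,\bm v)-(\bm u\times\bm\omega,\bm v)+R_e^{-1}(\nabla\times\bm u,\nabla\times\bm v)+(\nabla p,\bm v)=0\quad\forall\,\bm v\in H_0^h(\mathrm{curl},\Omega),$$ and $(\bm u,\nabla q)=0$ for all $q\in H_0^h(\mathrm{grad},\Omega)$. Then $$\frac{1}{\Delta t}\Big(\int_\Omega\bm u^{n+1}\cdot\bm\omega^{n+1}\,dx-\int_\Omega\bm u^{n}\cdot\bm\omega^{n}\,dx\Big)=-2R_e^{-1}\int_\Omega(\nabla\times\bm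 u)\cdot(\nabla\times\bm\omega)\,dx .$$ In particular, for $R_e=\infty$ the discrete fluid helicity $\int_\Omega\bm u^k\cdot\bm\omega^k\,dx$ is conserved from step $n$ to step $n+1$.
   Context: $(\cdot,\cdot)$ denotes the $L^2(\Omega)$ inner product. $H_0(\mathrm{curl},\Omega)=\{\bm v\in L^2(\Omega)^3:\nabla\times\bm v\in L^2(\Omega)^3,\ \bm v\times\bm n=0\text{ on }\partial\Omega\}$. Note that $\bm\omega=\mathbb Q_h^{\mathrm{curl}}(\nabla\times\bm u)$, i.e. $(\bm\omega,\bm\mu)=(\nabla\times\bm u,\bm\mu)$ for all $\bm\mu\in H_0^h(\mathrm{curl},\Omega)$. *)

theory Defs
  imports "HOL-Analysis.Analysis" "HOL-Analysis.Cross3"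
begin

definition pd :: "(real^3 \<Rightarrow> 'b::real_normed_vector) \<Rightarrow> 3 \<Rightarrow> real^3 \<Rightarrow> 'b" where
  "pd f j x = frechet_derivative f (at x) (axis j 1)"

fun iter_pd :: "(real^3 \<Rightarrow> 'b::real_normed_vector) \<Rightarrow> 3 list \<Rightarrow> real^3 \<Rightarrow> 'b" where
  "iter_pd f [] = f"
| "iter_pd f (j # js) = pd (iter_pd f js) j"

definition C_inf :: "(real^3 \<Rightarrow> 'b::real_normed_vector) \<Rightarrow> bool" where
  "C_inf f \<longleftrightarrow> (\<forall>js x. iter_pd f js differentiable (at x))"

definition test_fun :: "(real^3) set \<Rightarrow> (real^3 \<Rightarrow> 'b::real_normed_vector) \<Rightarrow> bool" where
  "test_fun \<Omega> \<phi> \<longleftrightarrow> C_inf \<phi> \<and> compact (closure {x. \<phi> x \<noteq> 0})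
      \<and> closure {x. \<phi> x \<noteq> 0} \<subseteq> \<Omega>"

definition grad :: "(real^3 \<Rightarrow> real) \<Rightarrow> real^3 \<Rightarrow> real^3" where
  "grad f x = (\<chi> j. pd f j x)"

definition curl :: "(real^3 \<Rightarrow> real^3) \<Rightarrow> real^3 \<Rightarrow> real^3" where
  "curl f x = vector [ (pd f 2 x)$3 - (pd f 3 x)$2,
                       (pd f 3 x)$1 - (pd f 1 x)$3,
                       (pd f 1 x)$2 - (pd f 2 x)$1 ]"

definition L2 :: "(real^3) set \<Rightarrow> (real^3 \<Rightarrow> 'b::real_normed_vector) \<Rightarrow> bool" where
  "L2 \<Omega> f \<longleftrightarrow> f \<in> borel_measurable (lebesgue_on \<Omega>)
      \<and> integrable (lebesgue_on \<Omega>) (\<lambda>x. (norm (f x))\<^sup>2)"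

definition ip :: "(real^3) set \<Rightarrow> (real^3 \<Rightarrow> 'b::real_inner) \<Rightarrow> (real^3 \<Rightarrow> 'b) \<Rightarrow> real" where
  "ip \<Omega> u v = integral\<^sup>L (lebesgue_on \<Omega>) (\<lambda>x. u x \<bullet> v x)"

definition has_weak_curl :: "(real^3) set \<Rightarrow> (real^3 \<Rightarrow> real^3) \<Rightarrow> (real^3 \<Rightarrow> real^3) \<Rightarrow> bool" where
  "has_weak_curl \<Omega> u w \<longleftrightarrow>
     (\<forall>\<phi>. test_fun \<Omega> \<phi> \<longrightarrow> ip \<Omega> u (curl \<phi>) = ip \<Omega> w \<phi>)"

definition has_weak_grad :: "(real^3) set \<Rightarrow> (real^3 \<Rightarrow> real) \<Rightarrow> (real^3 \<Rightarrow> real^3) \<Rightarrow> bool" where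
  "has_weak_grad \<Omega> p g \<longleftrightarrow>
     (\<forall>\<phi>. test_fun \<Omega> \<phi> \<longrightarrow> ip \<Omega> p (\<lambda>x. - (\<Sum>j\<in>UNIV. pd \<phi> j x $ j)) = ip \<Omega> g \<phi>)"

definition wcurl :: "(real^3) set \<Rightarrow> (real^3 \<Rightarrow> real^3) \<Rightarrow> real^3 \<Rightarrow> real^3" where
  "wcurl \<Omega> u = (SOME w. L2 \<Omega> w \<and> has_weak_curl \<Omega> u w)"

definition wgrad :: "(real^3) set \<Rightarrow> (real^3 \<Rightarrow> real) \<Rightarrow> real^3 \<Rightarrow> real^3" where
  "wgrad \<Omega> p = (SOME g. L2 \<Omega> g \<and> has_weak_grad \<Omega> p g)"

definition Hcurl :: "(real^3) set \<Rightarrow> (real^3 \<Rightarrow> real^3) set" where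
  "Hcurl \<Omega> = {u. L2 \<Omega> u \<and> (\<exists>w. L2 \<Omega> w \<and> has_weak_curl \<Omega> u w)}"

definition H1 :: "(real^3) set \<Rightarrow> (real^3 \<Rightarrow> real) set" where
  "H1 \<Omega> = {p. L2 \<Omega> p \<and> (\<exists>g. L2 \<Omega> g \<and> has_weak_grad \<Omega> p g)}"

text \<open>H_0(curl): closure of C_c^infinity(Omega)^3 in the H(curl) norm
  (the zero tangential trace space).\<close>
definition H0curl :: "(real^3) set \<Rightarrow> (real^3 \<Rightarrow> real^3) set" where
  "H0curl \<Omega> = {u. u \<in> Hcurl \<Omega> \<and> (\<exists>\<phi>::nat \<Rightarrow> real^3 \<Rightarrow> real^3. (\<forall>k. test_fun \<Omega> (\<phi> k))
       \<and> (\<lambda>k. ip \<Omega> (\<lambda>x. \<phi> k x - u x) (\<lambda>x. \<phi> k x - u x)) \<longlonglongrightarrow> 0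
       \<and> (\<lambda>k. ip \<Omega> (\<lambda>x. curl (\<phi> k) x - wcurl \<Omega> u x) (\<lambda>x. curl (\<phi> k) x - wcurl \<Omega> u x)) \<longlonglongrightarrow> 0)}"

definition H01 :: "(real^3) set \<Rightarrow> (real^3 \<Rightarrow> real) set" where
  "H01 \<Omega> = {p. p \<in> H1 \<Omega> \<and> (\<exists>\<phi>::nat \<Rightarrow> real^3 \<Rightarrow> real. (\<forall>k. test_fun \<Omega> (\<phi> k))
       \<and> (\<lambda>k. ip \<Omega> (\<lambda>x. \<phi> k x - p x) (\<lambda>x. \<phi> k x - p x)) \<longlonglongrightarrow> 0
       \<and> (\<lambda>k. ip \<Omega> (\<lambda>x. grad (\<phi> k) x - wgrad \<Omega> p x) (\<lambda>x. grad (\<phi> k) x - wgrad \<Omega> p x)) \<longlonglongrightarrow> 0)}"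

definition polyhedral_domain :: "(real^3) set \<Rightarrow> bool" where
  "polyhedral_domain \<Omega> \<longleftrightarrow> open \<Omega> \<and> connected \<Omega> \<and> bounded \<Omega>
     \<and> (\<exists>P. finite P \<and> (\<forall>S\<in>P. polytope S) \<and> \<Omega> = interior (\<Union>P))"

definition is_mesh :: "(real^3) set \<Rightarrow> (real^3) set set \<Rightarrow> bool" where
  "is_mesh \<Omega> \<T> \<longleftrightarrow> finite \<T> \<and> (\<forall>T\<in>\<T>. 3 simplex T) \<and> \<Union>\<T> = closure \<Omega>
     \<and> (\<forall>T\<in>\<T>. \<forall>T'\<in>\<T>. T \<noteq> T' \<longrightarrow> interior T \<inter> interior T' = {})"

definition poly3 :: "nat \<Rightarrow> (real^3 \<Rightarrow> real) \<Rightarrow> bool" where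
  "poly3 k f \<longleftrightarrow> (\<exists>c :: nat \<times> nat \<times> nat \<Rightarrow> real. \<forall>x.
     f x = (\<Sum>(a,b,d) \<in> {(a,b,d). a + b + d \<le> k}. c (a,b,d) * x$1 ^ a * x$2 ^ b * x$3 ^ d))"

definition pw_poly :: "(real^3) set set \<Rightarrow> nat \<Rightarrow> (real^3 \<Rightarrow> real) \<Rightarrow> bool" where
  "pw_poly \<T> k f \<longleftrightarrow> (\<forall>T\<in>\<T>. \<exists>P. poly3 k P \<and> (\<forall>x\<in>interior T. f x = P x))"

definition pw_poly_field :: "(real^3) set set \<Rightarrow> nat \<Rightarrow> (real^3 \<Rightarrow> real^3) \<Rightarrow> bool" where
  "pw_poly_field \<T> k u \<longleftrightarrow> (\<forall>i. pw_poly \<T> k (\<lambda>x. u x $ i))"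

definition fn_subspace :: "(real^3 \<Rightarrow> 'b::real_vector) set \<Rightarrow> bool" where
  "fn_subspace V \<longleftrightarrow> (\<lambda>x. 0) \<in> V \<and> (\<forall>u\<in>V. \<forall>v\<in>V. (\<lambda>x. u x + v x) \<in> V)
     \<and> (\<forall>c. \<forall>u\<in>V. (\<lambda>x. c *\<^sub>R u x) \<in> V)"

definition FE_grad_space :: "(real^3) set \<Rightarrow> (real^3) set set \<Rightarrow> nat \<Rightarrow> (real^3 \<Rightarrow> real) set \<Rightarrow> bool" where
  "FE_grad_space \<Omega> \<T> k V \<longleftrightarrow> fn_subspace V \<and> V \<subseteq> H01 \<Omega> \<and> (\<forall>p\<in>V. pw_poly \<T> k p)"

definition FE_curl_space :: "(real^3) set \<Rightarrow> (real^3) set set \<Rightarrow> nat \<Rightarrow> (real^3 \<Rightarrow> real^3) set \<Rightarrow> bool" where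
  "FE_curl_space \<Omega> \<T> k W \<longleftrightarrow> fn_subspace W \<and> W \<subseteq> H0curl \<Omega> \<and> (\<forall>u\<in>W. pw_poly_field \<T> k u)"

definition is_L2_proj :: "(real^3) set \<Rightarrow> (real^3 \<Rightarrow> real^3) set \<Rightarrow> (real^3 \<Rightarrow> real^3) \<Rightarrow> (real^3 \<Rightarrow> real^3) \<Rightarrow> bool" where
  "is_L2_proj \<Omega> W f g \<longleftrightarrow> g \<in> W \<and> (\<forall>\<mu>\<in>W. ip \<Omega> g \<mu> = ip \<Omega> f \<mu>)"

end

theory Submission
  imports Defs
begin


lemma pd_linear:
  assumes L: "bounded_linear L" and f: "f differentiable (at x)"
  shows "pd (\<lambda>y. L (f y)) j x = L (pd f j x)"
proof -
  have "(f has_derivative frechet_derivative f (at x)) (at x)"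
    using f frechet_derivative_works by blast
  then have "((\<lambda>y. L (f y)) has_derivative (\<lambda>h. L (frechet_derivative f (at x) h))) (at x)"
    using L bounded_linear.has_derivative by blast
  then have D: "(\<lambda>h. L (frechet_derivative f (at x) h)) = frechet_derivative (\<lambda>y. L (f y)) (at x)"
    by (rule frechet_derivative_at)
  show ?thesis unfolding pd_def D[symmetric] by simp
qed

lemma pd_sum:
  assumes "finite I" and f: "\<And>i. i \<in> I \<Longrightarrow> f i differentiable (at x)"
  shows "pd (\<lambda>y. \<Sum>i\<in>I. f i y) j x = (\<Sum>i\<in>I. pd (f i) j x)"
proof -
  have "\<And>i. i \<in> I \<Longrightarrow> (f i has_derivative frechet_derivative (f i) (at x)) (at x)"
    using f frechet_derivative_works by blast
  then have "((\<lambda>y. \<Sum>i\<in>I. f i y) has_derivative (\<lambda>h. \<Sum>i\<in>I. frechet_derivative (f i) (at x) h)) (at x)"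
    by (rule has_derivative_sum)
  then have D: "(\<lambda>h. \<Sum>i\<in>I. frechet_derivative (f i) (at x) h) = frechet_derivative (\<lambda>y. \<Sum>i\<in>I. f i y) (at x)"
    by (rule frechet_derivative_at)
  show ?thesis unfolding pd_def D[symmetric] by simp
qed

lemma curl_sum: "curl f x = (\<Sum>j\<in>UNIV. cross3 (axis j 1) (pd f j x))"
  unfolding curl_def cross3_def sum_3 
  by (simp add: vec_eq_iff vector_def axis_def forall_3)

lemma bl_cross: "bounded_linear (\<lambda>v. cross3 a v)"
  using bilinear_cross by (simp add: bilinear_def linear_conv_bounded_linear)


lemma diff_cross: "g differentiable (at x) \<Longrightarrow> (\<lambda>y. cross3 a (g y)) differentiable (at x)"
  using bl_cross bounded_linear_imp_differentiable differentiable_compose[of "\<lambda>v. cross3 a v" g x]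
  by (metis (no_types, lifting) comp_def)

lemma iter_pd_curl:
  assumes "C_inf f"
  shows "iter_pd (curl f) js x = (\<Sum>j\<in>UNIV. cross3 (axis j 1) (iter_pd f (js @ [j]) x))"
proof (induction js arbitrary: x)
  case Nil
  then show ?case by (simp add: curl_sum)
next
  case (Cons i js)
  have e: "iter_pd (curl f) js = (\<lambda>y. \<Sum>j\<in>UNIV. cross3 (axis j 1) (iter_pd f (js @ [j]) y))"
    using Cons.IH by (rule ext)
  have "iter_pd (curl f) (i # js) x = pd (\<lambda>y. \<Sum>j\<in>UNIV. cross3 (axis j 1) (iter_pd f (js @ [j]) y)) i x"
    by (simp add: e)
  also have "\<dots> = (\<Sum>j\<in>UNIV. pd (\<lambda>y. cross3 (axis j 1) (iter_pd f (js @ [j]) y)) i x)"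
    apply (rule pd_sum, simp)
    apply (rule diff_cross)
    using assms unfolding C_inf_def by blast
  also have "\<dots> = (\<Sum>j\<in>UNIV. cross3 (axis j 1) (iter_pd f ((i # js) @ [j]) x))"
    apply (rule sum.cong, simp)
    apply (subst pd_linear[OF bl_cross])
    using assms unfolding C_inf_def by auto
  finally show ?case .
qed

lemma C_inf_curl: assumes "C_inf f" shows "C_inf (curl f)"
  unfolding C_inf_def
proof (intro allI)
  fix js x
  have e: "iter_pd (curl f) js = (\<lambda>y. \<Sum>j\<in>UNIV. cross3 (axis j 1) (iter_pd f (js @ [j]) y))"
    using iter_pd_curl[OF assms] by (rule ext)
  show "iter_pd (curl f) js differentiable at x"
    unfolding e
    apply (rule differentiable_sum, simp, intro ballI)
    apply (rule diff_cross)
    using assms unfolding C_inf_def by blast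
qed


lemma diff_bl: "bounded_linear L \<Longrightarrow> g differentiable (at x) \<Longrightarrow> (\<lambda>y. L (g y)) differentiable (at x)"
  using bounded_linear_imp_differentiable differentiable_compose[of L g x]
  by (metis (no_types, lifting) comp_def)

lemma dir_mvt:
  fixes g :: "real^3 \<Rightarrow> real"
  assumes g: "\<And>y. g differentiable (at y)" and s: "0 < s"
  shows "\<exists>t. 0 < t \<and> t < s \<and> g (p + s *\<^sub>R d) - g p = s * frechet_derivative g (at (p + t *\<^sub>R d)) d"
proof -
  have "\<exists>t\<in>{0<..<s}. (\<lambda>\<tau>. g (p + \<tau> *\<^sub>R d)) s - (\<lambda>\<tau>. g (p + \<tau> *\<^sub>R d)) 0
          = (\<lambda>\<tau> r. r * frechet_derivative g (at (p + \<tau> *\<^sub>R d)) d) t (s - 0)"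
  proof (rule mvt_simple[OF s])
    fix \<tau> :: real
    have h1: "((\<lambda>\<tau>. p + \<tau> *\<^sub>R d) has_derivative (\<lambda>r. r *\<^sub>R d)) (at \<tau>)"
      by (auto intro!: derivative_eq_intros)
    have h2: "(g has_derivative frechet_derivative g (at (p + \<tau> *\<^sub>R d))) (at (p + \<tau> *\<^sub>R d))"
      using g frechet_derivative_works by blast
    have lin: "linear (frechet_derivative g (at (p + \<tau> *\<^sub>R d)))"
      using h2 has_derivative_linear by blast
    have "((\<lambda>\<tau>. g (p + \<tau> *\<^sub>R d)) has_derivative (\<lambda>r. frechet_derivative g (at (p + \<tau> *\<^sub>R d)) (r *\<^sub>R d))) (at \<tau>)"
      using diff_chain_at[OF h1 h2] by (simp add: o_def)
    moreover have "(\<lambda>r. frechet_derivative g (at (p + \<tau> *\<^sub>R d)) (r *\<^sub>R d)) = (\<lambda>r. r * frechet_derivative g (at (p + \<tau> *\<^sub>R d)) d)"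
      using linear_scale[OF lin] by auto
    ultimately show "((\<lambda>\<tau>. g (p + \<tau> *\<^sub>R d)) has_derivative (\<lambda>r. r * frechet_derivative g (at (p + \<tau> *\<^sub>R d)) d)) (at \<tau> within {0..s})"
      by (simp add: has_derivative_at_withinI)
  qed
  then show ?thesis by auto
qed

lemma schwarz_claim:
  fixes h :: "real^3 \<Rightarrow> real"
  assumes dh: "\<And>y. h differentiable (at y)" and dhi: "\<And>y. pd h i differentiable (at y)" and s: "0 < s"
  shows "\<exists>y. dist y x < 2 * s \<and> h (x + s *\<^sub>R axis i 1 + s *\<^sub>R axis j 1) - h (x + s *\<^sub>R axis i 1)
     - h (x + s *\<^sub>R axis j 1) + h x = s * s * pd (pd h i) j y"
proof -
  define a :: "real^3" where "a = axis i 1"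
  define b :: "real^3" where "b = axis j 1"
  define c where "c = s *\<^sub>R b"
  define g where "g z = h (z + c) - h z" for z
  have gder: "(g has_derivative (\<lambda>v. frechet_derivative h (at (z + c)) v - frechet_derivative h (at z) v)) (at z)" for z
  proof -
    have h1: "((\<lambda>z. z + c) has_derivative (\<lambda>v. v)) (at z)" by (auto intro!: derivative_eq_intros)
    have h2: "(h has_derivative frechet_derivative h (at (z + c))) (at (z + c))"
      using dh frechet_derivative_works by blast
    have h3: "(h has_derivative frechet_derivative h (at z)) (at z)"
      using dh frechet_derivative_works by blast
    have "((\<lambda>z. h (z + c)) has_derivative frechet_derivative h (at (z + c))) (at z)"
      using diff_chain_at[OF h1 h2] by (simp add: o_def)
    then show ?thesis unfolding g_def using h3 by (rule has_derivative_diff)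
  qed
  have gd: "\<And>y. g differentiable (at y)" using gder differentiable_def by blast
  have gfd: "frechet_derivative g (at z) = (\<lambda>v. frechet_derivative h (at (z + c)) v - frechet_derivative h (at z) v)" for z
    using gder frechet_derivative_at by metis
  obtain t where t: "0 < t" "t < s" and e1: "g (x + s *\<^sub>R a) - g x = s * frechet_derivative g (at (x + t *\<^sub>R a)) a"
    using dir_mvt[OF gd s] by blast
  have e1': "g (x + s *\<^sub>R a) - g x = s * (pd h i (x + t *\<^sub>R a + s *\<^sub>R b) - pd h i (x + t *\<^sub>R a))"
    using e1 unfolding gfd pd_def a_def c_def by simp
  obtain \<eta> where eta: "0 < \<eta>" "\<eta> < s" and e2: "pd h i (x + t *\<^sub>R a + s *\<^sub>R b) - pd h i (x + t *\<^sub>R a)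
      = s * frechet_derivative (pd h i) (at (x + t *\<^sub>R a + \<eta> *\<^sub>R b)) b"
    using dir_mvt[OF dhi s] by blast
  define y where "y = x + t *\<^sub>R a + \<eta> *\<^sub>R b"
  have "dist y x = norm (t *\<^sub>R a + \<eta> *\<^sub>R b)" unfolding y_def dist_norm by (simp add: algebra_simps)
  also have "\<dots> \<le> norm (t *\<^sub>R a) + norm (\<eta> *\<^sub>R b)" by (rule norm_triangle_ineq)
  also have "\<dots> = t + \<eta>" using t eta by (simp add: a_def b_def)
  finally have dy: "dist y x < 2 * s" using t eta by linarith
  have "h (x + s *\<^sub>R a + s *\<^sub>R b) - h (x + s *\<^sub>R a) - h (x + s *\<^sub>R b) + h x = g (x + s *\<^sub>R a) - g x"
    unfolding g_def c_def by (simp add: algebra_simps)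
  also have "\<dots> = s * s * pd (pd h i) j y"
    using e1' e2 unfolding y_def pd_def b_def by simp
  finally show ?thesis using dy unfolding a_def b_def by blast
qed

lemma schwarz:
  fixes h :: "real^3 \<Rightarrow> real"
  assumes dh: "\<And>y. h differentiable (at y)" and dhi: "\<And>y. pd h i differentiable (at y)"
    and dhj: "\<And>y. pd h j differentiable (at y)"
    and ci: "isCont (pd (pd h i) j) x" and cj: "isCont (pd (pd h j) i) x"
  shows "pd (pd h i) j x = pd (pd h j) i x"
proof (rule ccontr)
  let ?P = "pd (pd h i) j" and ?Q = "pd (pd h j) i"
  assume ne: "?P x \<noteq> ?Q x"
  define e where "e = \<bar>?P x - ?Q x\<bar> / 2"
  have e: "e > 0" using ne unfolding e_def by simp
  obtain d1 where d1: "d1 > 0" "\<And>y. dist y x < d1 \<Longrightarrow> dist (?P y) (?P x) < e"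
    using ci e unfolding continuous_at_eps_delta by blast
  obtain d2 where d2: "d2 > 0" "\<And>y. dist y x < d2 \<Longrightarrow> dist (?Q y) (?Q x) < e"
    using cj e unfolding continuous_at_eps_delta by blast
  define s where "s = min d1 d2 / 2"
  have s: "s > 0" using d1 d2 unfolding s_def by simp
  obtain y where y: "dist y x < 2 * s" and ey: "h (x + s *\<^sub>R axis i 1 + s *\<^sub>R axis j 1) - h (x + s *\<^sub>R axis i 1)
     - h (x + s *\<^sub>R axis j 1) + h x = s * s * ?P y"
    using schwarz_claim[OF dh dhi s] by blast
  obtain z where z: "dist z x < 2 * s" and ez: "h (x + s *\<^sub>R axis j 1 + s *\<^sub>R axis i 1) - h (x + s *\<^sub>R axis j 1)
     - h (x + s *\<^sub>R axis i 1) + h x = s * s * ?Q z"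
    using schwarz_claim[OF dh dhj s] by blast
  have "s * s * ?P y = s * s * ?Q z" using ey ez by (simp add: algebra_simps)
  then have PQ: "?P y = ?Q z" using s by simp
  have "dist (?P y) (?P x) < e" using d1 y unfolding s_def by auto
  moreover have "dist (?Q z) (?Q x) < e" using d2 z unfolding s_def by auto
  moreover have "\<And>A B C D :: real. \<bar>A - B\<bar> < \<bar>B - D\<bar> / 2 \<Longrightarrow> \<bar>C - D\<bar> < \<bar>B - D\<bar> / 2 \<Longrightarrow> A = C \<Longrightarrow> False"
    by (smt (verit) field_sum_of_halves)
  ultimately show False using PQ unfolding e_def dist_real_def by blast
qed


lemma pd_comp: "f differentiable (at x) \<Longrightarrow> pd (\<lambda>y. f y $ k) j x = pd f j x $ k"
  using pd_linear[OF bounded_linear_vec_nth] by blast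

lemma C_inf_diff: "C_inf f \<Longrightarrow> f differentiable (at x)"
  unfolding C_inf_def by (metis iter_pd.simps(1))

lemma C_inf_diff1: "C_inf f \<Longrightarrow> pd f i differentiable (at x)"
  unfolding C_inf_def by (metis iter_pd.simps)

lemma C_inf_diff2: "C_inf f \<Longrightarrow> pd (pd f i) j differentiable (at x)"
  unfolding C_inf_def by (metis iter_pd.simps)

lemma sym_vec:
  fixes f :: "real^3 \<Rightarrow> real^3"
  assumes f: "C_inf f"
  shows "pd (pd f i) j x = pd (pd f j) i x"
proof (subst vec_eq_iff, intro allI)
  fix k
  define h where "h y = f y $ k" for y
  have hi: "pd h l = (\<lambda>y. pd f l y $ k)" for l
    unfolding h_def by (rule ext, rule pd_comp, rule C_inf_diff[OF f])
  have hil: "pd (pd h l) m = (\<lambda>y. pd (pd f l) m y $ k)" for l m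
    unfolding hi by (rule ext, rule pd_comp, rule C_inf_diff1[OF f])
  have dh: "h differentiable (at y)" for y
    unfolding h_def by (rule diff_bl[OF bounded_linear_vec_nth C_inf_diff[OF f]])
  have dhl: "pd h l differentiable (at y)" for l y
    unfolding hi by (rule diff_bl[OF bounded_linear_vec_nth C_inf_diff1[OF f]])
  have c: "isCont (pd (pd h l) m) x" for l m
    unfolding hil
    by (rule differentiable_imp_continuous_within, rule diff_bl[OF bounded_linear_vec_nth C_inf_diff2[OF f]])
  have "pd (pd h i) j x = pd (pd h j) i x"
    by (rule schwarz[OF dh dhl dhl c c])
  then show "pd (pd f i) j x $ k = pd (pd f j) i x $ k" unfolding hil .
qed

lemma div_cross_sym:
  fixes S :: "3 \<Rightarrow> 3 \<Rightarrow> real^3"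
  assumes "\<And>i j. S i j = S j i"
  shows "(\<Sum>j\<in>UNIV. (\<Sum>i\<in>UNIV. cross3 (axis i 1) (S i j)) $ j) = 0"
proof -
  have a: "S 2 1 = S 1 2" "S 3 1 = S 1 3" "S 3 2 = S 2 3" using assms by auto
  show ?thesis unfolding sum_3 a cross3_def by (simp add: axis_def)
qed

lemma div_curl:
  fixes f :: "real^3 \<Rightarrow> real^3"
  assumes f: "C_inf f"
  shows "(\<Sum>j\<in>UNIV. pd (curl f) j x $ j) = 0"
proof -
  have "pd (curl f) j x = (\<Sum>i\<in>UNIV. cross3 (axis i 1) (pd (pd f i) j x))" for j
    using iter_pd_curl[OF f, of "[j]" x] by simp
  moreover have "(\<Sum>j\<in>UNIV. (\<Sum>i\<in>UNIV. cross3 (axis i 1) (pd (pd f i) j x)) $ j) = 0"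
    by (rule div_cross_sym[of "\<lambda>i j. pd (pd f i) j x"], rule sym_vec[OF f])
  ultimately show ?thesis by simp
qed

lemma pd_zero_outside:
  assumes f: "f differentiable (at x)" and x: "x \<notin> closure {y. f y \<noteq> 0}"
  shows "pd f j x = 0"
proof -
  define X where "X = - closure {y. f y \<noteq> 0}"
  have X: "open X" unfolding X_def by (rule open_Compl, rule closed_closure)
  have xX: "x \<in> X" using x unfolding X_def by simp
  have fz: "f z = 0" if "z \<in> X" for z
  proof -
    have "z \<notin> closure {y. f y \<noteq> 0}" using that unfolding X_def by simp
    show ?thesis
    proof (rule ccontr)
      assume "f z \<noteq> 0"
      then have "z \<in> {y. f y \<noteq> 0}" by simp
      then have "z \<in> closure {y. f y \<noteq> 0}" by (rule closure_subset[THEN subsetD])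
      with \<open>z \<notin> closure {y. f y \<noteq> 0}\<close> show False by contradiction
    qed
  qed
  have "frechet_derivative f (at x) = frechet_derivative (\<lambda>y. 0) (at x)"
    by (rule frechet_derivative_transform_within_open[OF f X xX fz])
  then show ?thesis unfolding pd_def by simp
qed

lemma test_fun_curl:
  assumes t: "test_fun \<Omega> \<psi>"
  shows "test_fun \<Omega> (curl \<psi>)"
proof -
  have ci: "C_inf \<psi>" using t unfolding test_fun_def by blast
  have sub: "{x. curl \<psi> x \<noteq> 0} \<subseteq> closure {x. \<psi> x \<noteq> 0}"
  proof
    fix x assume "x \<in> {x. curl \<psi> x \<noteq> 0}"
    then have ne: "curl \<psi> x \<noteq> 0" by simp
    show "x \<in> closure {x. \<psi> x \<noteq> 0}"
    proof (rule ccontr)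
      assume "x \<notin> closure {x. \<psi> x \<noteq> 0}"
      then have "\<And>j. pd \<psi> j x = 0" using pd_zero_outside[OF C_inf_diff[OF ci]] by blast
      then have "curl \<psi> x = 0" unfolding curl_sum by simp
      then show False using ne by simp
    qed
  qed
  then have sub2: "closure {x. curl \<psi> x \<noteq> 0} \<subseteq> closure {x. \<psi> x \<noteq> 0}"
    by (simp add: closure_minimal)
  have "compact (closure {x. curl \<psi> x \<noteq> 0})"
    using t sub2 unfolding test_fun_def
    by (metis closed_closure compact_Int_closed inf.absorb_iff2)
  then show ?thesis using t sub2 C_inf_curl[OF ci] unfolding test_fun_def by blast
qed



type_synonym vf = "real^3 \<Rightarrow> real^3"

lemma L2_meas: "L2 \<Omega> f \<Longrightarrow> f \<in> borel_measurable (lebesgue_on \<Omega>)"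
  unfolding L2_def by blast

lemma L2_int: "L2 \<Omega> f \<Longrightarrow> integrable (lebesgue_on \<Omega>) (\<lambda>x. (norm (f x))\<^sup>2)"
  unfolding L2_def by blast

lemma inner_bound: "\<bar>(a::real^3) \<bullet> b\<bar> \<le> (norm a)\<^sup>2 + (norm b)\<^sup>2"
proof -
  have "\<bar>a \<bullet> b\<bar> \<le> norm a * norm b" by (rule Cauchy_Schwarz_ineq2)
  also have "\<dots> \<le> (norm a)\<^sup>2 + (norm b)\<^sup>2"
  proof -
    have h: "0 \<le> (norm a - norm b)\<^sup>2" by simp
    have "norm a * norm b \<ge> 0" by simp
    then show ?thesis using h unfolding power2_diff by linarith
  qed
  finally show ?thesis .
qed

lemma L2_inner_int:
  fixes f g :: vf
  assumes "L2 \<Omega> f" "L2 \<Omega> g"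
  shows "integrable (lebesgue_on \<Omega>) (\<lambda>x. f x \<bullet> g x)"
proof (rule Bochner_Integration.integrable_bound[where f = "\<lambda>x. (norm (f x))\<^sup>2 + (norm (g x))\<^sup>2"])
  show "integrable (lebesgue_on \<Omega>) (\<lambda>x. (norm (f x))\<^sup>2 + (norm (g x))\<^sup>2)"
    using assms by (intro Bochner_Integration.integrable_add L2_int)
  show "(\<lambda>x. f x \<bullet> g x) \<in> borel_measurable (lebesgue_on \<Omega>)"
    using assms by (intro borel_measurable_inner L2_meas)
  show "AE x in lebesgue_on \<Omega>. norm (f x \<bullet> g x) \<le> norm ((norm (f x))\<^sup>2 + (norm (g x))\<^sup>2)"
  proof (rule AE_I2)
    fix x
    have "\<bar>f x \<bullet> g x\<bar> \<le> (norm (f x))\<^sup>2 + (norm (g x))\<^sup>2" by (rule inner_bound)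
    then show "norm (f x \<bullet> g x) \<le> norm ((norm (f x))\<^sup>2 + (norm (g x))\<^sup>2)" by simp
  qed
qed

lemma L2_add:
  fixes f g :: vf
  assumes f: "L2 \<Omega> f" and g: "L2 \<Omega> g"
  shows "L2 \<Omega> (\<lambda>x. f x + g x)"
  unfolding L2_def
proof
  show "(\<lambda>x. f x + g x) \<in> borel_measurable (lebesgue_on \<Omega>)"
    using f g by (intro borel_measurable_add L2_meas)
  show "integrable (lebesgue_on \<Omega>) (\<lambda>x. (norm (f x + g x))\<^sup>2)"
  proof (rule Bochner_Integration.integrable_bound[where f = "\<lambda>x. 2 * (norm (f x))\<^sup>2 + 2 * (norm (g x))\<^sup>2"])
    show "integrable (lebesgue_on \<Omega>) (\<lambda>x. 2 * (norm (f x))\<^sup>2 + 2 * (norm (g x))\<^sup>2)"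
      using f g by (intro Bochner_Integration.integrable_add integrable_mult_right L2_int)
    have "(\<lambda>x. f x + g x) \<in> borel_measurable (lebesgue_on \<Omega>)"
      using f g by (intro borel_measurable_add L2_meas)
    then show "(\<lambda>x. (norm (f x + g x))\<^sup>2) \<in> borel_measurable (lebesgue_on \<Omega>)"
      by measurable
    have "(norm (a + b))\<^sup>2 \<le> 2 * (norm a)\<^sup>2 + 2 * (norm b)\<^sup>2" for a b :: "real^3"
    proof -
      have "norm (a + b) \<le> norm a + norm b" by (rule norm_triangle_ineq)
      then have "(norm (a + b))\<^sup>2 \<le> (norm a + norm b)\<^sup>2" by (simp add: power_mono)
      also have "\<dots> \<le> 2 * (norm a)\<^sup>2 + 2 * (norm b)\<^sup>2"
      proof -
        have h: "0 \<le> (norm a - norm b)\<^sup>2" by simp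
        then show ?thesis unfolding power2_diff power2_sum by linarith
      qed
      finally show ?thesis .
    qed
    then show "AE x in lebesgue_on \<Omega>. norm ((norm (f x + g x))\<^sup>2) \<le> norm (2 * (norm (f x))\<^sup>2 + 2 * (norm (g x))\<^sup>2)"
      by (intro AE_I2) simp
  qed
qed

lemma L2_scale:
  fixes f :: vf
  assumes f: "L2 \<Omega> f"
  shows "L2 \<Omega> (\<lambda>x. c *\<^sub>R f x)"
  unfolding L2_def
proof
  show "(\<lambda>x. c *\<^sub>R f x) \<in> borel_measurable (lebesgue_on \<Omega>)"
    using f by (intro borel_measurable_scaleR borel_measurable_const L2_meas)
  have "integrable (lebesgue_on \<Omega>) (\<lambda>x. c\<^sup>2 * (norm (f x))\<^sup>2)"
    using f by (intro integrable_mult_right L2_int)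
  then show "integrable (lebesgue_on \<Omega>) (\<lambda>x. (norm (c *\<^sub>R f x))\<^sup>2)"
    by (simp add: power_mult_distrib)
qed

lemma L2_diff:
  fixes f g :: vf
  assumes f: "L2 \<Omega> f" and g: "L2 \<Omega> g"
  shows "L2 \<Omega> (\<lambda>x. f x - g x)"
  using L2_add[OF f L2_scale[OF g, of "-1"]] by simp

lemma ip_add_left:
  fixes f g h :: vf
  assumes "L2 \<Omega> f" "L2 \<Omega> g" "L2 \<Omega> h"
  shows "ip \<Omega> (\<lambda>x. f x + g x) h = ip \<Omega> f h + ip \<Omega> g h"
  unfolding ip_def inner_add_left
  by (rule Bochner_Integration.integral_add; rule L2_inner_int; fact)

lemma ip_diff_left:
  fixes f g h :: vf
  assumes "L2 \<Omega> f" "L2 \<Omega> g" "L2 \<Omega> h"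
  shows "ip \<Omega> (\<lambda>x. f x - g x) h = ip \<Omega> f h - ip \<Omega> g h"
  unfolding ip_def inner_diff_left
  by (rule Bochner_Integration.integral_diff; rule L2_inner_int; fact)

lemma ip_commute: "ip \<Omega> f g = ip \<Omega> g f"
  unfolding ip_def by (simp add: inner_commute)

lemma ip_add_right:
  fixes f g h :: vf
  assumes "L2 \<Omega> f" "L2 \<Omega> g" "L2 \<Omega> h"
  shows "ip \<Omega> h (\<lambda>x. f x + g x) = ip \<Omega> h f + ip \<Omega> h g"
  using ip_add_left[OF assms] by (simp add: ip_commute)

lemma ip_diff_right:
  fixes f g h :: vf
  assumes "L2 \<Omega> f" "L2 \<Omega> g" "L2 \<Omega> h"
  shows "ip \<Omega> h (\<lambda>x. f x - g x) = ip \<Omega> h f - ip \<Omega> h g"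
  using ip_diff_left[OF assms] by (simp add: ip_commute)

lemma ip_scale_left: "ip \<Omega> (\<lambda>x. c *\<^sub>R (f x :: real^3)) g = c * ip \<Omega> f g"
  unfolding ip_def by simp

lemma ip_scale_right: "ip \<Omega> g (\<lambda>x. c *\<^sub>R (f x :: real^3)) = c * ip \<Omega> g f"
  unfolding ip_def by simp

lemma ip_nonneg: "ip \<Omega> (f::vf) f \<ge> 0"
  unfolding ip_def by (rule integral_nonneg_AE) auto

lemma quad_cs:
  fixes A B C :: real
  assumes q: "\<And>t. 0 \<le> A + 2 * t * B + t\<^sup>2 * C" and C: "C \<ge> 0"
  shows "B\<^sup>2 \<le> A * C"
proof (cases "C = 0")
  case True
  show ?thesis
  proof (rule ccontr)
    assume "\<not> ?thesis"
    then have "B \<noteq> 0" using True by simp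
    have "0 \<le> A + 2 * (- (A + 1) / (2 * B)) * B" using q[of "- (A + 1) / (2 * B)"] True by simp
    also have "\<dots> = -1" using \<open>B \<noteq> 0\<close> by (simp add: field_simps)
    finally show False by simp
  qed
next
  case False
  have Cp: "C > 0" using False C by simp
  have "0 \<le> A + 2 * (- B / C) * B + (- B / C)\<^sup>2 * C" by (rule q)
  also have "\<dots> = A - B\<^sup>2 / C" using Cp by (simp add: field_simps power2_eq_square)
  finally show ?thesis using Cp by (simp add: field_simps)
qed

lemma ip_cs:
  fixes f g :: vf
  assumes f: "L2 \<Omega> f" and g: "L2 \<Omega> g"
  shows "(ip \<Omega> f g)\<^sup>2 \<le> ip \<Omega> f f * ip \<Omega> g g"
proof (rule quad_cs)
  fix t :: real
  have tg: "L2 \<Omega> (\<lambda>x. t *\<^sub>R g x)" by (rule L2_scale[OF g])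
  have "0 \<le> ip \<Omega> (\<lambda>x. f x + t *\<^sub>R g x) (\<lambda>x. f x + t *\<^sub>R g x)" by (rule ip_nonneg)
  also have "\<dots> = ip \<Omega> f f + 2 * t * ip \<Omega> f g + t\<^sup>2 * ip \<Omega> g g"
    using ip_add_left[OF f tg L2_add[OF f tg]] ip_add_right[OF f tg f] ip_add_right[OF f tg tg]
    by (simp add: ip_scale_left ip_scale_right ip_commute[of \<Omega> g f] power2_eq_square algebra_simps)
  finally show "0 \<le> ip \<Omega> f f + 2 * t * ip \<Omega> f g + t\<^sup>2 * ip \<Omega> g g" .
next
  show "0 \<le> ip \<Omega> g g" by (rule ip_nonneg)
qed

lemma ip_lim:
  fixes f w :: vf and \<psi> :: "nat \<Rightarrow> vf"
  assumes f: "L2 \<Omega> f" and w: "L2 \<Omega> w" and ps: "\<And>m. L2 \<Omega> (\<psi> m)"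
    and conv: "(\<lambda>m. ip \<Omega> (\<lambda>x. \<psi> m x - w x) (\<lambda>x. \<psi> m x - w x)) \<longlonglongrightarrow> 0"
  shows "(\<lambda>m. ip \<Omega> f (\<psi> m)) \<longlonglongrightarrow> ip \<Omega> f w"
proof -
  let ?d = "\<lambda>m x. \<psi> m x - w x"
  have dL: "L2 \<Omega> (?d m)" for m by (rule L2_diff[OF ps w])
  have eq: "ip \<Omega> f (\<psi> m) - ip \<Omega> f w = ip \<Omega> f (?d m)" for m
    using ip_diff_right[OF ps w f] by simp
  have bnd: "norm (ip \<Omega> f (?d m)) \<le> sqrt (ip \<Omega> f f) * sqrt (ip \<Omega> (?d m) (?d m))" for m
  proof -
    have "(ip \<Omega> f (?d m))\<^sup>2 \<le> ip \<Omega> f f * ip \<Omega> (?d m) (?d m)" by (rule ip_cs[OF f dL])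
    then have "sqrt ((ip \<Omega> f (?d m))\<^sup>2) \<le> sqrt (ip \<Omega> f f * ip \<Omega> (?d m) (?d m))"
      using real_sqrt_le_mono by blast
    then show ?thesis by (simp add: real_sqrt_mult)
  qed
  have "(\<lambda>m. sqrt (ip \<Omega> f f) * sqrt (ip \<Omega> (?d m) (?d m))) \<longlonglongrightarrow> sqrt (ip \<Omega> f f) * sqrt 0"
    by (intro tendsto_intros conv)
  then have "(\<lambda>m. sqrt (ip \<Omega> f f) * sqrt (ip \<Omega> (?d m) (?d m))) \<longlonglongrightarrow> 0" by simp
  then have "(\<lambda>m. ip \<Omega> f (?d m)) \<longlonglongrightarrow> 0"
    by (rule Lim_null_comparison[rotated]) (use bnd in auto)
  then have "(\<lambda>m. ip \<Omega> f (\<psi> m) - ip \<Omega> f w) \<longlonglongrightarrow> 0" by (simp add: eq)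
  then show ?thesis by (simp add: LIM_zero_iff)
qed



lemma L2_cont:
  fixes f :: vf
  assumes b: "bounded \<Omega>" and o: "open \<Omega>" and c: "continuous_on UNIV f"
  shows "L2 \<Omega> f"
  unfolding L2_def
proof
  have lm: "\<Omega> \<in> lmeasurable" using lmeasurable_open[OF b o] .
  then have sl: "\<Omega> \<in> sets lebesgue" by (rule fmeasurableD)
  have c\<Omega>: "continuous_on \<Omega> f" using c continuous_on_subset by blast
  show meas: "f \<in> borel_measurable (lebesgue_on \<Omega>)"
    by (rule continuous_imp_measurable_on_sets_lebesgue[OF c\<Omega> sl])
  interpret fm: finite_measure "lebesgue_on \<Omega>" by (rule finite_measure_lebesgue_on[OF lm])
  have "compact (f ` closure \<Omega>)"
    using compact_continuous_image[OF continuous_on_subset[OF c] compact_closure[THEN iffD2, OF b]] by blast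
  then obtain B where B: "\<And>x. x \<in> closure \<Omega> \<Longrightarrow> norm (f x) \<le> B"
    using compact_imp_bounded bounded_iff by (metis image_eqI)
  show "integrable (lebesgue_on \<Omega>) (\<lambda>x. (norm (f x))\<^sup>2)"
  proof (rule fm.integrable_const_bound[where B = "B\<^sup>2"])
    show "AE x in lebesgue_on \<Omega>. norm ((norm (f x))\<^sup>2) \<le> B\<^sup>2"
    proof (rule AE_I2)
      fix x assume "x \<in> space (lebesgue_on \<Omega>)"
      then have "x \<in> closure \<Omega>" using closure_subset by auto
      then have "norm (f x) \<le> B" by (rule B)
      then show "norm ((norm (f x))\<^sup>2) \<le> B\<^sup>2" by (simp add: power_mono)
    qed
    show "(\<lambda>x. (norm (f x))\<^sup>2) \<in> borel_measurable (lebesgue_on \<Omega>)"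
      using meas by measurable
  qed
qed

lemma C_inf_cont: "C_inf f \<Longrightarrow> continuous_on UNIV f"
  by (rule differentiable_imp_continuous_on) (auto simp: differentiable_on_def intro: differentiable_at_withinI C_inf_diff)

lemma test_fun_L2:
  assumes "bounded \<Omega>" "open \<Omega>" "test_fun \<Omega> (\<psi>::vf)"
  shows "L2 \<Omega> \<psi>"
  using assms L2_cont C_inf_cont unfolding test_fun_def by blast

lemma curl_L2:
  assumes "bounded \<Omega>" "open \<Omega>" "test_fun \<Omega> (\<psi>::vf)"
  shows "L2 \<Omega> (curl \<psi>)"
  using test_fun_L2[OF assms(1,2) test_fun_curl[OF assms(3)]] .

lemma Hcurl_w:
  assumes "u \<in> Hcurl \<Omega>"
  shows "L2 \<Omega> (wcurl \<Omega> u) \<and> has_weak_curl \<Omega> u (wcurl \<Omega> u)"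
proof -
  have "\<exists>w. L2 \<Omega> w \<and> has_weak_curl \<Omega> u w" using assms unfolding Hcurl_def by blast
  then show ?thesis unfolding wcurl_def by (rule someI_ex)
qed

lemma H1_w:
  assumes "p \<in> H1 \<Omega>"
  shows "L2 \<Omega> (wgrad \<Omega> p) \<and> has_weak_grad \<Omega> p (wgrad \<Omega> p)"
proof -
  have "\<exists>g. L2 \<Omega> g \<and> has_weak_grad \<Omega> p g" using assms unfolding H1_def by blast
  then show ?thesis unfolding wgrad_def by (rule someI_ex)
qed

lemma Hcurl_L2: "u \<in> Hcurl \<Omega> \<Longrightarrow> L2 \<Omega> u" unfolding Hcurl_def by blast
lemma H0curl_Hcurl: "u \<in> H0curl \<Omega> \<Longrightarrow> u \<in> Hcurl \<Omega>" unfolding H0curl_def by blast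

lemma H0curl_approx:
  assumes "u \<in> H0curl \<Omega>"
  obtains \<phi> :: "nat \<Rightarrow> vf" where "\<And>k. test_fun \<Omega> (\<phi> k)"
    "(\<lambda>k. ip \<Omega> (\<lambda>x. \<phi> k x - u x) (\<lambda>x. \<phi> k x - u x)) \<longlonglongrightarrow> 0"
    "(\<lambda>k. ip \<Omega> (\<lambda>x. curl (\<phi> k) x - wcurl \<Omega> u x) (\<lambda>x. curl (\<phi> k) x - wcurl \<Omega> u x)) \<longlonglongrightarrow> 0"
  using assms unfolding H0curl_def by blast

lemma curl_sym:
  assumes b: "bounded \<Omega>" and o: "open \<Omega>" and a: "a \<in> Hcurl \<Omega>" and bb: "bb \<in> H0curl \<Omega>"
  shows "ip \<Omega> (wcurl \<Omega> a) bb = ip \<Omega> a (wcurl \<Omega> bb)"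
proof -
  obtain \<psi> where t: "\<And>k. test_fun \<Omega> (\<psi> k)"
    and c1: "(\<lambda>k. ip \<Omega> (\<lambda>x. \<psi> k x - bb x) (\<lambda>x. \<psi> k x - bb x)) \<longlonglongrightarrow> 0"
    and c2: "(\<lambda>k. ip \<Omega> (\<lambda>x. curl (\<psi> k) x - wcurl \<Omega> bb x) (\<lambda>x. curl (\<psi> k) x - wcurl \<Omega> bb x)) \<longlonglongrightarrow> 0"
    using H0curl_approx[OF bb] by blast
  have wa: "L2 \<Omega> (wcurl \<Omega> a)" "has_weak_curl \<Omega> a (wcurl \<Omega> a)" using Hcurl_w[OF a] by auto
  have wb: "L2 \<Omega> (wcurl \<Omega> bb)" using Hcurl_w[OF H0curl_Hcurl[OF bb]] by auto
  have L1: "(\<lambda>k. ip \<Omega> (wcurl \<Omega> a) (\<psi> k)) \<longlonglongrightarrow> ip \<Omega> (wcurl \<Omega> a) bb"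
    by (rule ip_lim[OF wa(1) Hcurl_L2[OF H0curl_Hcurl[OF bb]] test_fun_L2[OF b o t] c1])
  have L2': "(\<lambda>k. ip \<Omega> a (curl (\<psi> k))) \<longlonglongrightarrow> ip \<Omega> a (wcurl \<Omega> bb)"
    by (rule ip_lim[OF Hcurl_L2[OF a] wb curl_L2[OF b o t] c2])
  have "ip \<Omega> a (curl (\<psi> k)) = ip \<Omega> (wcurl \<Omega> a) (\<psi> k)" for k
    using wa(2) t unfolding has_weak_curl_def by blast
  then have "(\<lambda>k. ip \<Omega> (wcurl \<Omega> a) (\<psi> k)) \<longlonglongrightarrow> ip \<Omega> a (wcurl \<Omega> bb)" using L2' by simp
  then show ?thesis using L1 LIMSEQ_unique by blast
qed

lemma grad_uniq:
  assumes b: "bounded \<Omega>" and o: "open \<Omega>" and p: "p \<in> H1 \<Omega>" and g: "L2 \<Omega> g" "has_weak_grad \<Omega> p g"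
    and w: "w \<in> H0curl \<Omega>"
  shows "ip \<Omega> (wgrad \<Omega> p) w = ip \<Omega> g w"
proof -
  obtain \<psi> where t: "\<And>k. test_fun \<Omega> (\<psi> k)"
    and c1: "(\<lambda>k. ip \<Omega> (\<lambda>x. \<psi> k x - w x) (\<lambda>x. \<psi> k x - w x)) \<longlonglongrightarrow> 0"
    using H0curl_approx[OF w] by blast
  have wp: "L2 \<Omega> (wgrad \<Omega> p)" "has_weak_grad \<Omega> p (wgrad \<Omega> p)" using H1_w[OF p] by auto
  have wL: "L2 \<Omega> w" using Hcurl_L2[OF H0curl_Hcurl[OF w]] .
  have L1: "(\<lambda>k. ip \<Omega> (wgrad \<Omega> p) (\<psi> k)) \<longlonglongrightarrow> ip \<Omega> (wgrad \<Omega> p) w"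
    by (rule ip_lim[OF wp(1) wL test_fun_L2[OF b o t] c1])
  have L2': "(\<lambda>k. ip \<Omega> g (\<psi> k)) \<longlonglongrightarrow> ip \<Omega> g w"
    by (rule ip_lim[OF g(1) wL test_fun_L2[OF b o t] c1])
  have "ip \<Omega> (wgrad \<Omega> p) (\<psi> k) = ip \<Omega> g (\<psi> k)" for k
  proof -
    have e1: "ip \<Omega> p (\<lambda>x. - (\<Sum>j\<in>UNIV. pd (\<psi> k) j x $ j)) = ip \<Omega> (wgrad \<Omega> p) (\<psi> k)"
      using wp(2) t unfolding has_weak_grad_def by blast
    have e2: "ip \<Omega> p (\<lambda>x. - (\<Sum>j\<in>UNIV. pd (\<psi> k) j x $ j)) = ip \<Omega> g (\<psi> k)"
      using g(2) t unfolding has_weak_grad_def by blast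
    show ?thesis using e1 e2 by simp
  qed
  then show ?thesis using L1 L2' LIMSEQ_unique by simp
qed

lemma curl_of_grad:
  assumes b: "bounded \<Omega>" and o: "open \<Omega>" and g: "g \<in> Hcurl \<Omega>" "has_weak_grad \<Omega> p g"
    and u: "u \<in> H0curl \<Omega>"
  shows "ip \<Omega> (wcurl \<Omega> g) u = 0"
proof -
  obtain \<psi> where t: "\<And>k. test_fun \<Omega> (\<psi> k)"
    and c1: "(\<lambda>k. ip \<Omega> (\<lambda>x. \<psi> k x - u x) (\<lambda>x. \<psi> k x - u x)) \<longlonglongrightarrow> 0"
    using H0curl_approx[OF u] by blast
  have wg: "L2 \<Omega> (wcurl \<Omega> g)" "has_weak_curl \<Omega> g (wcurl \<Omega> g)" using Hcurl_w[OF g(1)] by auto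
  have uL: "L2 \<Omega> u" using Hcurl_L2[OF H0curl_Hcurl[OF u]] .
  have L1: "(\<lambda>k. ip \<Omega> (wcurl \<Omega> g) (\<psi> k)) \<longlonglongrightarrow> ip \<Omega> (wcurl \<Omega> g) u"
    by (rule ip_lim[OF wg(1) uL test_fun_L2[OF b o t] c1])
  have z: "ip \<Omega> (wcurl \<Omega> g) (\<psi> k) = 0" for k
  proof -
    have "ip \<Omega> (wcurl \<Omega> g) (\<psi> k) = ip \<Omega> g (curl (\<psi> k))"
      using wg(2) t unfolding has_weak_curl_def by (simp add: eq_commute)
    also have "\<dots> = ip \<Omega> p (\<lambda>x. - (\<Sum>j\<in>UNIV. pd (curl (\<psi> k)) j x $ j))"
      using g(2) test_fun_curl[OF t] unfolding has_weak_grad_def by (simp add: eq_commute)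
    also have "(\<lambda>x. - (\<Sum>j\<in>UNIV. pd (curl (\<psi> k)) j x $ j)) = (\<lambda>x. 0)"
      using div_curl t unfolding test_fun_def by auto
    finally show ?thesis unfolding ip_def by simp
  qed
  show ?thesis using L1 unfolding z by (simp add: LIMSEQ_const_iff)
qed



theorem mainTheorem3:
  fixes \<Omega> :: "(real^3) set" and \<T> :: "(real^3) set set" and kg kc :: nat
    and Vh :: "(real^3 \<Rightarrow> real) set" and Wh :: "(real^3 \<Rightarrow> real^3) set"
    and dt :: real and Re :: ereal
    and u0 u1 \<omega>0 \<omega>1 :: "real^3 \<Rightarrow> real^3" and p :: "real^3 \<Rightarrow> real"
  assumes dom: "polyhedral_domain \<Omega>" and contr: "contractible \<Omega>"
    and mesh: "is_mesh \<Omega> \<T>"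
    and Vh: "FE_grad_space \<Omega> \<T> kg Vh" and Wh: "FE_curl_space \<Omega> \<T> kc Wh"
    and grad_incl: "\<forall>q\<in>Vh. \<exists>g\<in>Wh. has_weak_grad \<Omega> q g"
    and dt: "dt > 0" and Re: "Re > 0"
    and u0: "u0 \<in> Wh" and u1: "u1 \<in> Wh" and p: "p \<in> Vh"
    and \<omega>0: "is_L2_proj \<Omega> Wh (wcurl \<Omega> u0) \<omega>0"
    and \<omega>1: "is_L2_proj \<Omega> Wh (wcurl \<Omega> u1) \<omega>1"
    and eq: "\<forall>v\<in>Wh.
        ip \<Omega> (\<lambda>x. (1 / dt) *\<^sub>R (u1 x - u0 x)) v
      - ip \<Omega> (\<lambda>x. cross3 ((1/2) *\<^sub>R (u1 x + u0 x)) ((1/2) *\<^sub>R (\<omega>1 x + \<omega>0 x))) v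
      + real_of_ereal (inverse Re) * ip \<Omega> (wcurl \<Omega> (\<lambda>x. (1/2) *\<^sub>R (u1 x + u0 x))) (wcurl \<Omega> v)
      + ip \<Omega> (wgrad \<Omega> p) v = 0"
    and div: "\<forall>q\<in>Vh. ip \<Omega> (\<lambda>x. (1/2) *\<^sub>R (u1 x + u0 x)) (wgrad \<Omega> q) = 0"
  shows "(1 / dt) * (ip \<Omega> u1 \<omega>1 - ip \<Omega> u0 \<omega>0)
           = - 2 * real_of_ereal (inverse Re)
               * ip \<Omega> (wcurl \<Omega> (\<lambda>x. (1/2) *\<^sub>R (u1 x + u0 x)))
                      (wcurl \<Omega> (\<lambda>x. (1/2) *\<^sub>R (\<omega>1 x + \<omega>0 x)))
       \<and> (Re = \<infinity> \<longrightarrow> ip \<Omega> u1 \<omega>1 = ip \<Omega> u0 \<omega>0)"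
proof -
  have b: "bounded \<Omega>" and o: "open \<Omega>" using dom unfolding polyhedral_domain_def by auto
  have sub: "fn_subspace Wh" and WH: "Wh \<subseteq> H0curl \<Omega>" using Wh unfolding FE_curl_space_def by auto
  have VH: "Vh \<subseteq> H01 \<Omega>" using Vh unfolding FE_grad_space_def by auto
  have pH1: "p \<in> H1 \<Omega>" using p VH unfolding H01_def by auto
  have W0: "\<And>w. w \<in> Wh \<Longrightarrow> w \<in> H0curl \<Omega>" using WH by auto
  have WC: "\<And>w. w \<in> Wh \<Longrightarrow> w \<in> Hcurl \<Omega>" using W0 H0curl_Hcurl by blast
  have WL: "\<And>w. w \<in> Wh \<Longrightarrow> L2 \<Omega> w" using WC Hcurl_L2 by blast
  have o0: "\<omega>0 \<in> Wh" "\<And>\<mu>. \<mu> \<in> Wh \<Longrightarrow> ip \<Omega> \<omega>0 \<mu> = ip \<Omega> (wcurl \<Omega> u0) \<mu>"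
    using \<omega>0 unfolding is_L2_proj_def by auto
  have o1: "\<omega>1 \<in> Wh" "\<And>\<mu>. \<mu> \<in> Wh \<Longrightarrow> ip \<Omega> \<omega>1 \<mu> = ip \<Omega> (wcurl \<Omega> u1) \<mu>"
    using \<omega>1 unfolding is_L2_proj_def by auto
  define \<omega> where "\<omega> = (\<lambda>x. (1/2::real) *\<^sub>R (\<omega>1 x + \<omega>0 x))"
  have sW: "(\<lambda>x. \<omega>1 x + \<omega>0 x) \<in> Wh" using sub o0(1) o1(1) unfolding fn_subspace_def by blast
  have \<omega>W: "\<omega> \<in> Wh"
  proof -
    have "\<forall>c. \<forall>u\<in>Wh. (\<lambda>x. c *\<^sub>R u x) \<in> Wh" using sub unfolding fn_subspace_def by blast
    from bspec[OF spec[OF this, of "1/2"] sW] show ?thesis unfolding \<omega>_def by simp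
  qed
  have L0: "L2 \<Omega> u0" "L2 \<Omega> u1" "L2 \<Omega> \<omega>0" "L2 \<Omega> \<omega>1" using WL u0 u1 o0(1) o1(1) by auto
  let ?R = "real_of_ereal (inverse Re)"
  let ?C = "ip \<Omega> (wcurl \<Omega> (\<lambda>x. (1/2) *\<^sub>R (u1 x + u0 x))) (wcurl \<Omega> \<omega>)"
  have T2: "ip \<Omega> (\<lambda>x. cross3 ((1/2) *\<^sub>R (u1 x + u0 x)) ((1/2) *\<^sub>R (\<omega>1 x + \<omega>0 x))) \<omega> = 0"
    unfolding ip_def \<omega>_def by (simp only: dot_cross_self(3)) simp
  obtain g where gW: "g \<in> Wh" and gg: "has_weak_grad \<Omega> p g" using grad_incl p by blast
  have gL: "L2 \<Omega> g" using WL gW by blast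
  have cg: "ip \<Omega> (wcurl \<Omega> uk) g = 0" if uk: "uk \<in> Wh" for uk
  proof -
    have "ip \<Omega> (wcurl \<Omega> uk) g = ip \<Omega> uk (wcurl \<Omega> g)" by (rule curl_sym[OF b o WC[OF uk] W0[OF gW]])
    also have "\<dots> = ip \<Omega> (wcurl \<Omega> g) uk" by (rule ip_commute)
    also have "\<dots> = 0" by (rule curl_of_grad[OF b o WC[OF gW] gg W0[OF uk]])
    finally show ?thesis .
  qed
  have T4: "ip \<Omega> (wgrad \<Omega> p) \<omega> = 0"
  proof -
    have "ip \<Omega> (wgrad \<Omega> p) \<omega> = ip \<Omega> g \<omega>" by (rule grad_uniq[OF b o pH1 gL gg W0[OF \<omega>W]])
    also have "\<dots> = ip \<Omega> \<omega> g" by (rule ip_commute)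
    also have "\<dots> = (1/2) * (ip \<Omega> \<omega>1 g + ip \<Omega> \<omega>0 g)"
      unfolding \<omega>_def ip_scale_left ip_add_left[OF L0(4) L0(3) gL] ..
    also have "\<dots> = (1/2) * (ip \<Omega> (wcurl \<Omega> u1) g + ip \<Omega> (wcurl \<Omega> u0) g)"
      using o0(2)[OF gW] o1(2)[OF gW] by simp
    also have "\<dots> = 0" using cg[OF u0] cg[OF u1] by simp
    finally show ?thesis .
  qed
  have cross: "ip \<Omega> u1 \<omega>0 = ip \<Omega> u0 \<omega>1"
  proof -
    have "ip \<Omega> u1 \<omega>0 = ip \<Omega> \<omega>0 u1" by (rule ip_commute)
    also have "\<dots> = ip \<Omega> (wcurl \<Omega> u0) u1" by (rule o0(2)[OF u1])
    also have "\<dots> = ip \<Omega> u0 (wcurl \<Omega> u1)" by (rule curl_sym[OF b o WC[OF u0] W0[OF u1]])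
    also have "\<dots> = ip \<Omega> (wcurl \<Omega> u1) u0" by (rule ip_commute)
    also have "\<dots> = ip \<Omega> \<omega>1 u0" by (rule o1(2)[OF u0, symmetric])
    also have "\<dots> = ip \<Omega> u0 \<omega>1" by (rule ip_commute)
    finally show ?thesis .
  qed
  have T1: "ip \<Omega> (\<lambda>x. (1 / dt) *\<^sub>R (u1 x - u0 x)) \<omega> = (1/dt) * (1/2) * (ip \<Omega> u1 \<omega>1 - ip \<Omega> u0 \<omega>0)"
  proof -
    have "ip \<Omega> (\<lambda>x. (1 / dt) *\<^sub>R (u1 x - u0 x)) \<omega> = (1/dt) * ((1/2) * ip \<Omega> (\<lambda>x. u1 x - u0 x) (\<lambda>x. \<omega>1 x + \<omega>0 x))"
      unfolding \<omega>_def ip_scale_left ip_scale_right ..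
    also have "ip \<Omega> (\<lambda>x. u1 x - u0 x) (\<lambda>x. \<omega>1 x + \<omega>0 x) = ip \<Omega> u1 (\<lambda>x. \<omega>1 x + \<omega>0 x) - ip \<Omega> u0 (\<lambda>x. \<omega>1 x + \<omega>0 x)"
      by (rule ip_diff_left[OF L0(2) L0(1) L2_add[OF L0(4) L0(3)]])
    also have "\<dots> = (ip \<Omega> u1 \<omega>1 + ip \<Omega> u1 \<omega>0) - (ip \<Omega> u0 \<omega>1 + ip \<Omega> u0 \<omega>0)"
      using ip_add_right[OF L0(4) L0(3) L0(2)] ip_add_right[OF L0(4) L0(3) L0(1)] by simp
    also have "\<dots> = ip \<Omega> u1 \<omega>1 - ip \<Omega> u0 \<omega>0" using cross by simp
    finally show ?thesis by simp
  qed
  have E: "ip \<Omega> (\<lambda>x. (1 / dt) *\<^sub>R (u1 x - u0 x)) \<omega>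
      - ip \<Omega> (\<lambda>x. cross3 ((1/2) *\<^sub>R (u1 x + u0 x)) ((1/2) *\<^sub>R (\<omega>1 x + \<omega>0 x))) \<omega>
      + ?R * ?C + ip \<Omega> (wgrad \<Omega> p) \<omega> = 0"
    using eq \<omega>W by blast
  then have E2: "(1/dt) * (1/2) * (ip \<Omega> u1 \<omega>1 - ip \<Omega> u0 \<omega>0) + ?R * ?C = 0"
    unfolding T1 T2 T4 by simp
  then have main: "(1 / dt) * (ip \<Omega> u1 \<omega>1 - ip \<Omega> u0 \<omega>0) = - 2 * ?R * ?C"
    by (simp add: algebra_simps)
  have second: "Re = \<infinity> \<longrightarrow> ip \<Omega> u1 \<omega>1 = ip \<Omega> u0 \<omega>0"
  proof
    assume "Re = \<infinity>"
    then have "?R = 0" by simp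
    then have "(1 / dt) * (ip \<Omega> u1 \<omega>1 - ip \<Omega> u0 \<omega>0) = 0" using main by simp
    then show "ip \<Omega> u1 \<omega>1 = ip \<Omega> u0 \<omega>0" using dt by simp
  qed
  show ?thesis using main second unfolding \<omega>_def by blast
qed


end
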